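(* Let the setting and notation be as in the context. Suppose the $L_1$-Consistency Assumption and the Concentration Assumption hold, and that $n^{1/2}\big(r_4(n)r_3(n,\theta^* )+r_5(n)r_1(n,\theta^* )\big)=o(1)$. Then $$n^{1/2}\hat S(\hat{\boldsymbol\beta}_{\theta^*})=n^{1/2}S(\boldsymbol\beta^* )+o_p(1),$$ where $S(\boldsymbol\beta)=\mathbf v^{*T}\mathbf t(\mathbf Z,\boldsymbol\beta)$ and $\hat{\boldsymbol\beta}_{\theta^*}=(\theta^*,\hat{\boldsymbol\gamma}^T)^T$.
   Context: Data: a random matrix $\mathbf Z\in\mathbb R^{n\times q}$; $\mathbb P^*$ denotes probability under the true parameter $\boldsymbol\beta^*\in\mathbb R^d$; $o_p(1)$ is with respect to $\mathbb P^*$ as $n\to\infty$ ($d$ may depend on $n$). Let $\mathbf t(\mathbf Z,\boldsymbol\beta):\mathbb R^{n\times q}\times\mathbb R^d\to\mathbb R^d$ be twice differentiable in $\boldsymbol\beta$, $E_{\mathbf t}(\boldsymbol\beta)=\lim_n\mathbb E\,\mathbf t(\mathbf Z,\boldsymbol\beta)$, $\boldsymbol\beta^*$ the unique root of $E_{\mathbf t}$. $\mathbf T(\mathbf Z,\boldsymbol\beta)=\partial\mathbf t/\partial\boldsymbol\beta$, $E_{\mathbf T}(\boldsymbol\beta)=\lim_n\mathbb E\,\mathbf T(\mathbf Z,\boldsymbol\beta)$, invertible at $\boldsymbol\beta^*$. Write $\boldsymbol\beta=(\theta,\boldsymbol\gamma^T)^T$ ($\theta$ first coordinate), $\boldsymbol\beta^*=(\theta^*,\boldsymbol\gamma^{*T})^T$,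 $\boldsymbol\beta_{\check\theta}=(\check\theta,\boldsymbol\gamma^T)^T$. $\mathbf v^{*T}$ = first row of $[E_{\mathbf T}(\boldsymbol\beta^* )]^{-1}$. $\hat{\boldsymbol\beta}=(\hat\theta,\hat{\boldsymbol\gamma}^T)^T=\arg\min\|\boldsymbol\beta\|_1$ s.t. $\|\mathbf t(\mathbf Z,\boldsymbol\beta)\|_\infty\le\lambda$; $\hat{\mathbf v}=\arg\min\|\mathbf v\|_1$ s.t. $\|\mathbf v^T\mathbf T(\mathbf Z,\hat{\boldsymbol\beta})-\mathbf e_1\|_\infty\le\lambda'$, $\mathbf e_1=(1,0,\dots,0)$; $\hat S(\boldsymbol\beta)=\hat{\mathbf v}^T\mathbf t(\mathbf Z,\boldsymbol\beta)$. $[\mathbf A]_{-1}$ is $\mathbf A$ without its first column. Concentration Assumption: there is a neighborhood $\mathcal N_{\theta^*}$ of $\theta^*$ and functions $r_1,r_2,r_3$ with $\sup_{\theta\in\mathcal N_{\theta^*}}\max_i r_i(n,\theta)=o(1)$ such that for all $\theta\in\mathcal N_{\theta^*}$: $\lim_n\mathbb P^*(\|\mathbf t(\mathbf Z,\boldsymbol\beta^*_\theta)-E_{\mathbf t}(\boldsymbol\beta^*_\theta)\|_\infty\le r_1(n,\theta))=1$; $\lim_n\mathbb P^*(|\mathbf v^{*T}\mathbf t(\mathbf Z,\boldsymbol\beta^*_\theta)-\mathbf v^{*T}E_{\mathbf t}(\boldsymbol\beta^*_\theta)|\le r_2(n,\theta))=1$; $\lim_n\mathbb P^*(\sup_{\nu\in[0,1]}\|\hat{\mathbf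 v}^T\mathbf T(\mathbf Z,\tilde{\boldsymbol\beta}_\nu)-\mathbf v^{*T}E_{\mathbf T}(\boldsymbol\beta^*_\theta)\|_\infty\le r_3(n,\theta))=1$ with $\tilde{\boldsymbol\beta}_\nu=\nu\hat{\boldsymbol\beta}_\theta+(1-\nu)\boldsymbol\beta^*_\theta$; and $\sup_{\theta\in\mathcal N_{\theta^*}}\|E_{\mathbf t}(\boldsymbol\beta^*_\theta)\|_\infty<\infty$, $\sup_{\theta\in\mathcal N_{\theta^*}}\|\mathbf v^{*T}[E_{\mathbf T}(\boldsymbol\beta^*_\theta)]_{-1}\|_\infty<\infty$. $L_1$-Consistency Assumption: $\lim_n\mathbb P^*(\|\hat{\boldsymbol\beta}-\boldsymbol\beta^*\|_1\le r_4(n))=1$, $\lim_n\mathbb P^*(\|\hat{\mathbf v}-\mathbf v^*\|_1\le r_5(n))=1$, $\max(r_4(n),r_5(n))=o(1)$. *)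

theory Defs
  imports "HOL-Probability.Probability"
begin

text \<open>Vectors of R^d are modelled as functions nat => real vanishing from index d on
  (d may depend on n); matrices as nat => nat => real.\<close>

definition vecs :: "nat \<Rightarrow> (nat \<Rightarrow> real) set" where
  "vecs d = {x. \<forall>j\<ge>d. x j = 0}"

definition mats :: "nat \<Rightarrow> nat \<Rightarrow> (nat \<Rightarrow> nat \<Rightarrow> real) set" where
  "mats n q = {z. \<forall>i j. (n \<le> i \<or> q \<le> j) \<longrightarrow> z i j = 0}"

definition l1norm :: "nat \<Rightarrow> (nat \<Rightarrow> real) \<Rightarrow> real" where
  "l1norm d x = (\<Sum>j<d. \<bar>x j\<bar>)"

definition linfnorm :: "nat \<Rightarrow> (nat \<Rightarrow> real) \<Rightarrow> real" where
  "linfnorm d x = Max (insert 0 ((\<lambda>j. \<bar>x j\<bar>) ` {..<d}))"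

text \<open>First unit vector e_1 (index 0 is the first coordinate).\<close>
definition e1 :: "nat \<Rightarrow> real" where
  "e1 k = (if k = 0 then 1 else 0)"

definition vecmat :: "nat \<Rightarrow> (nat \<Rightarrow> real) \<Rightarrow> (nat \<Rightarrow> nat \<Rightarrow> real) \<Rightarrow> nat \<Rightarrow> real" where
  "vecmat d v A k = (\<Sum>j<d. v j * A j k)"

definition dotp :: "nat \<Rightarrow> (nat \<Rightarrow> real) \<Rightarrow> (nat \<Rightarrow> real) \<Rightarrow> real" where
  "dotp d v x = (\<Sum>j<d. v j * x j)"

definition is_inverse_mat :: "nat \<Rightarrow> (nat \<Rightarrow> nat \<Rightarrow> real) \<Rightarrow> (nat \<Rightarrow> nat \<Rightarrow> real) \<Rightarrow> bool" where
  "is_inverse_mat d A B \<longleftrightarrow>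
     (\<forall>i<d. \<forall>k<d. (\<Sum>j<d. A i j * B j k) = (if i = k then 1 else 0)) \<and>
     (\<forall>i<d. \<forall>k<d. (\<Sum>j<d. B i j * A j k) = (if i = k then 1 else 0))"

text \<open>Frechet differentiability of a scalar function on R^d at beta with gradient Df
  (all norms on R^d are equivalent; the l1 norm is used).\<close>
definition frechet_diff_at :: "nat \<Rightarrow> ((nat \<Rightarrow> real) \<Rightarrow> real) \<Rightarrow> (nat \<Rightarrow> real) \<Rightarrow> (nat \<Rightarrow> real) \<Rightarrow> bool" where
  "frechet_diff_at d f Df \<beta> \<longleftrightarrow>
     (\<forall>\<epsilon>>0. \<exists>\<delta>>0. \<forall>h\<in>vecs d. l1norm d h < \<delta> \<longrightarrow>
        \<bar>f (\<lambda>j. \<beta> j + h j) - f \<beta> - (\<Sum>j<d. Df j * h j)\<bar> \<le> \<epsilon> * l1norm d h)"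

text \<open>"lim_n P*(A_n) = 1", read via inner probability: there are measurable events
  B_n contained in A_n whose probability tends to 1 (equivalent to P*(A_n) -> 1 when the
  A_n are measurable).\<close>
definition wp_to_one :: "(nat \<Rightarrow> 'a measure) \<Rightarrow> (nat \<Rightarrow> 'a set) \<Rightarrow> bool" where
  "wp_to_one M A \<longleftrightarrow>
     (\<exists>B. (\<forall>n. B n \<in> sets (M n) \<and> B n \<subseteq> A n) \<and> (\<lambda>n. measure (M n) (B n)) \<longlonglongrightarrow> 1)"

definition op1 :: "(nat \<Rightarrow> 'a measure) \<Rightarrow> (nat \<Rightarrow> 'a \<Rightarrow> real) \<Rightarrow> bool" where
  "op1 M X \<longleftrightarrow> (\<forall>\<epsilon>>0. wp_to_one M (\<lambda>n. {\<omega> \<in> space (M n). \<bar>X n \<omega>\<bar> \<le> \<epsilon>}))"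

end

theory Submission
  imports Defs
begin



lemma linf_ge: "j < d \<Longrightarrow> \<bar>x j\<bar> \<le> linfnorm d x"
  unfolding linfnorm_def by (intro Max_ge) auto

lemma linf_nonneg: "0 \<le> linfnorm d x"
  unfolding linfnorm_def by (intro Max_ge) auto

lemma l1_nonneg: "0 \<le> l1norm d x"
  unfolding l1norm_def by (intro sum_nonneg) auto

lemma dot_bound:
  assumes "\<And>j. j < d \<Longrightarrow> \<bar>b j\<bar> \<le> K"
  shows "\<bar>dotp d a b\<bar> \<le> l1norm d a * K"
proof -
  have "\<bar>dotp d a b\<bar> \<le> (\<Sum>j<d. \<bar>a j * b j\<bar>)"
    unfolding dotp_def by (rule sum_abs)
  also have "\<dots> \<le> (\<Sum>j<d. \<bar>a j\<bar> * K)"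
    by (intro sum_mono) (auto simp: abs_mult intro: mult_left_mono assms)
  also have "\<dots> = l1norm d a * K" unfolding l1norm_def by (simp add: sum_distrib_right)
  finally show ?thesis .
qed

lemma deriv_line:
  assumes fd: "frechet_diff_at d f D (\<lambda>j. b j + x * \<Delta> j)" and \<Delta>v: "\<Delta> \<in> vecs d"
  shows "((\<lambda>s. f (\<lambda>j. b j + s * \<Delta> j)) has_real_derivative (\<Sum>j<d. D j * \<Delta> j)) (at x)"
proof -
  define L where "L = l1norm d \<Delta>"
  have L0: "0 \<le> L" unfolding L_def by (rule l1_nonneg)
  have l1s: "l1norm d (\<lambda>j. s * \<Delta> j) = \<bar>s\<bar> * L" for s
    unfolding l1norm_def L_def by (simp add: abs_mult sum_distrib_left)
  show ?thesis
    unfolding has_field_derivative_iff LIM_eq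
  proof (intro allI impI)
    fix r :: real assume r: "r > 0"
    define \<epsilon> where "\<epsilon> = r / (2 * (L + 1))"
    have \<epsilon>: "\<epsilon> > 0" using r L0 by (simp add: \<epsilon>_def)
    obtain \<delta> where \<delta>: "\<delta> > 0" and H: "\<And>h. h \<in> vecs d \<Longrightarrow> l1norm d h < \<delta> \<Longrightarrow>
        \<bar>f (\<lambda>j. (b j + x * \<Delta> j) + h j) - f (\<lambda>j. b j + x * \<Delta> j) - (\<Sum>j<d. D j * h j)\<bar>
          \<le> \<epsilon> * l1norm d h"
      using fd \<epsilon> unfolding frechet_diff_at_def by blast
    show "\<exists>s>0. \<forall>y. y \<noteq> x \<and> norm (y - x) < s \<longrightarrow>
        norm ((f (\<lambda>j. b j + y * \<Delta> j) - f (\<lambda>j. b j + x * \<Delta> j)) / (y - x) - (\<Sum>j<d. D j * \<Delta> j)) < r"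
    proof (intro exI[of _ "\<delta> / (L + 1)"] conjI allI impI)
      show "\<delta> / (L + 1) > 0" using \<delta> L0 by simp
      fix y assume y: "y \<noteq> x \<and> norm (y - x) < \<delta> / (L + 1)"
      define s where "s = y - x"
      have s0: "s \<noteq> 0" using y by (simp add: s_def)
      have hv: "(\<lambda>j. s * \<Delta> j) \<in> vecs d" using \<Delta>v by (simp add: vecs_def)
      have "\<bar>s\<bar> * L \<le> \<bar>s\<bar> * (L + 1)" by (simp add: mult_left_mono)
      also have "\<dots> < \<delta>" using y L0 by (simp add: s_def pos_less_divide_eq)
      finally have lt: "l1norm d (\<lambda>j. s * \<Delta> j) < \<delta>" by (simp add: l1s)
      have eqf: "(\<lambda>j. (b j + x * \<Delta> j) + s * \<Delta> j) = (\<lambda>j. b j + y * \<Delta> j)"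
        by (auto simp: s_def algebra_simps)
      have sumeq: "(\<Sum>j<d. D j * (s * \<Delta> j)) = s * (\<Sum>j<d. D j * \<Delta> j)"
        by (simp add: sum_distrib_left algebra_simps)
      have B: "\<bar>f (\<lambda>j. b j + y * \<Delta> j) - f (\<lambda>j. b j + x * \<Delta> j) - s * (\<Sum>j<d. D j * \<Delta> j)\<bar>
          \<le> \<epsilon> * (\<bar>s\<bar> * L)"
        using H[OF hv lt] by (simp add: eqf sumeq l1s)
      have "(f (\<lambda>j. b j + y * \<Delta> j) - f (\<lambda>j. b j + x * \<Delta> j)) / (y - x) - (\<Sum>j<d. D j * \<Delta> j)
          = (f (\<lambda>j. b j + y * \<Delta> j) - f (\<lambda>j. b j + x * \<Delta> j) - s * (\<Sum>j<d. D j * \<Delta> j)) / s"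
        using s0 by (simp add: s_def field_simps)
      hence "norm ((f (\<lambda>j. b j + y * \<Delta> j) - f (\<lambda>j. b j + x * \<Delta> j)) / (y - x) - (\<Sum>j<d. D j * \<Delta> j))
          \<le> \<epsilon> * L"
        using B s0 by (simp add: abs_divide divide_le_eq mult.commute mult.left_commute)
      also have "\<epsilon> * L < r"
      proof -
        have "\<epsilon> * L \<le> \<epsilon> * (L + 1)" using \<epsilon> by simp
        also have "\<dots> = r / 2" using L0 by (simp add: \<epsilon>_def field_simps)
        finally show ?thesis using r by simp
      qed
      finally show "norm ((f (\<lambda>j. b j + y * \<Delta> j) - f (\<lambda>j. b j + x * \<Delta> j)) / (y - x) - (\<Sum>j<d. D j * \<Delta> j)) < r" .
    qed
  qed
qed

lemma core:
  fixes tt :: "(nat \<Rightarrow> real) \<Rightarrow> nat \<Rightarrow> real" and TT :: "(nat \<Rightarrow> real) \<Rightarrow> nat \<Rightarrow> nat \<Rightarrow> real"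
  assumes d1: "1 \<le> d" and bsv: "bs \<in> vecs d" and bhv: "bh \<in> vecs d"
    and diff: "\<And>\<beta> i. \<beta> \<in> vecs d \<Longrightarrow> i < d \<Longrightarrow> frechet_diff_at d (\<lambda>b. tt b i) (\<lambda>j. TT \<beta> i j) \<beta>"
    and inv: "\<And>k. k < d \<Longrightarrow> vecmat d vs ETc k = e1 k"
    and c1: "linfnorm d (\<lambda>j. tt bs j - Etc j) \<le> Ro" and Etc: "\<And>j. j < d \<Longrightarrow> Etc j = 0"
    and c3: "\<forall>\<nu>\<in>{0..1::real}. linfnorm d (\<lambda>k. vecmat d vh
           (TT (\<lambda>j. \<nu> * (bh(0 := \<theta>c)) j + (1 - \<nu>) * bs j)) k - vecmat d vs ETc k) \<le> Rt"
    and bs0: "bs 0 = \<theta>c"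
    and c4: "l1norm d (\<lambda>j. bh j - bs j) \<le> Rf"
    and c5: "l1norm d (\<lambda>j. vh j - vs j) \<le> Rv"
  shows "\<bar>dotp d vh (tt (bh(0 := \<theta>c))) - dotp d vs (tt bs)\<bar> \<le> Rf * Rt + Rv * Ro"
proof -
  define \<Delta> where "\<Delta> = (\<lambda>j. (bh(0 := \<theta>c)) j - bs j)"
  have \<Delta>v: "\<Delta> \<in> vecs d" using bsv bhv d1 by (auto simp: vecs_def \<Delta>_def)
  have \<Delta>0: "\<Delta> 0 = 0" using bs0 by (simp add: \<Delta>_def)
  have l1\<Delta>: "l1norm d \<Delta> \<le> Rf"
  proof -
    have "l1norm d \<Delta> \<le> l1norm d (\<lambda>j. bh j - bs j)"
      unfolding l1norm_def \<Delta>_def by (intro sum_mono) (auto simp: bs0)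
    thus ?thesis using c4 by simp
  qed
  define p where "p = (\<lambda>x. (\<lambda>j. bs j + x * \<Delta> j))"
  have pv: "p x \<in> vecs d" for x using bsv \<Delta>v by (auto simp: vecs_def p_def)
  define g where "g = (\<lambda>x. dotp d vh (tt (p x)))"
  define G where "G = (\<lambda>x. \<Sum>j<d. vecmat d vh (TT (p x)) j * \<Delta> j)"
  have der: "DERIV g x :> G x" for x
  proof -
    have "((\<lambda>x. \<Sum>i<d. vh i * tt (p x) i) has_real_derivative
        (\<Sum>i<d. vh i * (\<Sum>j<d. TT (p x) i j * \<Delta> j))) (at x)"
    proof (rule DERIV_sum, rule DERIV_cmult)
      fix i assume "i \<in> {..<d}"
      hence "frechet_diff_at d (\<lambda>b. tt b i) (\<lambda>j. TT (p x) i j) (\<lambda>j. bs j + x * \<Delta> j)"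
        using diff[OF pv] by (simp add: p_def)
      from deriv_line[OF this \<Delta>v] show "((\<lambda>x. tt (p x) i) has_real_derivative (\<Sum>j<d. TT (p x) i j * \<Delta> j)) (at x)"
        by (simp add: p_def)
    qed
    moreover have "(\<Sum>i<d. vh i * (\<Sum>j<d. TT (p x) i j * \<Delta> j)) = G x"
    proof -
      have "(\<Sum>i<d. vh i * (\<Sum>j<d. TT (p x) i j * \<Delta> j)) = (\<Sum>i<d. \<Sum>j<d. vh i * TT (p x) i j * \<Delta> j)"
        by (simp add: sum_distrib_left mult.assoc)
      also have "\<dots> = (\<Sum>j<d. \<Sum>i<d. vh i * TT (p x) i j * \<Delta> j)"
        by (rule sum.swap)
      also have "\<dots> = G x"
        unfolding G_def vecmat_def by (simp add: sum_distrib_right)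
      finally show ?thesis .
    qed
    ultimately show ?thesis by (simp add: g_def dotp_def)
  qed
  obtain z where z: "0 < z" "z < 1" and mv: "g 1 - g 0 = (1 - 0) * G z"
    using MVT2[of 0 1 g G, OF zero_less_one der] by blast
  have g1: "g 1 = dotp d vh (tt (bh(0 := \<theta>c)))"
  proof -
    have "p 1 = bh(0 := \<theta>c)" unfolding p_def \<Delta>_def by (auto simp: fun_eq_iff)
    thus ?thesis unfolding g_def by simp
  qed
  have g0: "g 0 = dotp d vh (tt bs)" unfolding g_def p_def by simp
  have pz: "p z = (\<lambda>j. z * (bh(0 := \<theta>c)) j + (1 - z) * bs j)"
    unfolding p_def \<Delta>_def by (rule ext) (simp add: algebra_simps)
  have "G z = (\<Sum>j<d. (vecmat d vh (TT (p z)) j - vecmat d vs ETc j) * \<Delta> j) + (\<Sum>j<d. vecmat d vs ETc j * \<Delta> j)"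
    unfolding G_def by (simp only: sum.distrib[symmetric] left_diff_distrib diff_add_cancel)
  also have "(\<Sum>j<d. vecmat d vs ETc j * \<Delta> j) = (\<Sum>j<d. e1 j * \<Delta> j)"
    by (intro sum.cong) (auto simp: inv)
  also have "\<dots> = 0" using \<Delta>0 by (intro sum.neutral) (auto simp: e1_def)
  finally have Gz: "G z = dotp d \<Delta> (\<lambda>j. vecmat d vh (TT (p z)) j - vecmat d vs ETc j)"
    by (simp add: dotp_def mult.commute)
  have Rt: "\<And>j. j < d \<Longrightarrow> \<bar>vecmat d vh (TT (p z)) j - vecmat d vs ETc j\<bar> \<le> Rt"
  proof -
    fix j assume j: "j < d"
    have "linfnorm d (\<lambda>k. vecmat d vh (TT (p z)) k - vecmat d vs ETc k) \<le> Rt"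
    proof -
      have "z \<in> {0..1}" using z by simp
      from bspec[OF c3 this] show ?thesis unfolding pz .
    qed
    thus "\<bar>vecmat d vh (TT (p z)) j - vecmat d vs ETc j\<bar> \<le> Rt"
      using linf_ge[OF j, of "\<lambda>k. vecmat d vh (TT (p z)) k - vecmat d vs ETc k"] by linarith
  qed
  have Rt0: "0 \<le> Rt" using Rt[of 0] d1 by linarith
  have "\<bar>G z\<bar> \<le> l1norm d \<Delta> * Rt" unfolding Gz by (rule dot_bound) (rule Rt)
  also have "\<dots> \<le> Rf * Rt" using l1\<Delta> Rt0 by (simp add: mult_right_mono)
  finally have A: "\<bar>G z\<bar> \<le> Rf * Rt" .
  have Ro: "\<And>j. j < d \<Longrightarrow> \<bar>tt bs j\<bar> \<le> Ro"
  proof -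
    fix j assume j: "j < d"
    show "\<bar>tt bs j\<bar> \<le> Ro"
      using c1 linf_ge[OF j, of "\<lambda>j. tt bs j - Etc j"] Etc[OF j] by simp
  qed
  have Ro0: "0 \<le> Ro" using Ro[of 0] d1 by linarith
  have "\<bar>dotp d (\<lambda>j. vh j - vs j) (tt bs)\<bar> \<le> l1norm d (\<lambda>j. vh j - vs j) * Ro"
    by (rule dot_bound) (rule Ro)
  also have "\<dots> \<le> Rv * Ro" using c5 Ro0 by (simp add: mult_right_mono)
  finally have B: "\<bar>dotp d (\<lambda>j. vh j - vs j) (tt bs)\<bar> \<le> Rv * Ro" .
  have split: "dotp d vh (tt (bh(0 := \<theta>c))) - dotp d vs (tt bs)
      = (g 1 - g 0) + dotp d (\<lambda>j. vh j - vs j) (tt bs)"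
  proof -
    have "dotp d (\<lambda>j. vh j - vs j) (tt bs) = dotp d vh (tt bs) - dotp d vs (tt bs)"
      unfolding dotp_def by (simp only: left_diff_distrib sum_subtractf)
    thus ?thesis unfolding g1 g0 by linarith
  qed
  have mv': "g 1 - g 0 = G z" using mv by simp
  show ?thesis unfolding split mv' using A B abs_triangle_ineq[of "G z" "dotp d (\<lambda>j. vh j - vs j) (tt bs)"] by linarith
qed

lemma prob_Int_lb:
  assumes "prob_space M" "A \<in> sets M" "B \<in> sets M"
  shows "measure M A + measure M B - 1 \<le> measure M (A \<inter> B)"
proof -
  interpret prob_space M using assms(1) .
  have "measure M (A - B) = measure M A - measure M (A \<inter> B)"
    using finite_measure_Diff'[OF assms(2,3)] .
  moreover have "measure M (A - B) \<le> measure M (space M - B)"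
  proof (rule finite_measure_mono)
    show "A - B \<subseteq> space M - B" using sets.sets_into_space[OF assms(2)] by blast
    show "space M - B \<in> sets M" using assms(3) by (rule sets.compl_sets)
  qed
  moreover have "measure M (space M - B) = 1 - measure M B" using prob_compl[OF assms(3)] .
  ultimately show ?thesis by linarith
qed

lemma wp_Int:
  assumes P: "\<And>n. prob_space (M n)" and a: "wp_to_one M A" and b: "wp_to_one M B"
  shows "wp_to_one M (\<lambda>n. A n \<inter> B n)"
proof -
  obtain BA where BA1: "\<And>n. BA n \<in> sets (M n) \<and> BA n \<subseteq> A n" and BA2: "(\<lambda>n. measure (M n) (BA n)) \<longlonglongrightarrow> 1"
    using a unfolding wp_to_one_def by blast
  obtain BB where BB1: "\<And>n. BB n \<in> sets (M n) \<and> BB n \<subseteq> B n" and BB2: "(\<lambda>n. measure (M n) (BB n)) \<longlonglongrightarrow> 1"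
    using b unfolding wp_to_one_def by blast
  have lo: "\<And>n. measure (M n) (BA n) + measure (M n) (BB n) - 1 \<le> measure (M n) (BA n \<inter> BB n)"
  proof -
    fix n
    have "BA n \<in> sets (M n)" "BB n \<in> sets (M n)" using BA1[of n] BB1[of n] by auto
    thus "measure (M n) (BA n) + measure (M n) (BB n) - 1 \<le> measure (M n) (BA n \<inter> BB n)"
      by (rule prob_Int_lb[OF P[of n]])
  qed
  have hi: "\<And>n. measure (M n) (BA n \<inter> BB n) \<le> 1"
    by (rule prob_space.prob_le_1[OF P])
  have lim: "(\<lambda>n. measure (M n) (BA n) + measure (M n) (BB n) - 1) \<longlonglongrightarrow> 1 + 1 - 1"
    by (intro tendsto_diff tendsto_add BA2 BB2 tendsto_const)
  have "(\<lambda>n. measure (M n) (BA n \<inter> BB n)) \<longlonglongrightarrow> 1"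
    by (rule tendsto_sandwich[OF always_eventually always_eventually _ tendsto_const])
       (use lo hi lim in auto)
  moreover have "\<And>n. BA n \<inter> BB n \<in> sets (M n) \<and> BA n \<inter> BB n \<subseteq> A n \<inter> B n" using BA1 BB1 by blast
  ultimately show ?thesis unfolding wp_to_one_def by (intro exI[of _ "\<lambda>n. BA n \<inter> BB n"]) blast
qed

lemma wp_mono_ev:
  assumes a: "wp_to_one M A" and ev: "eventually (\<lambda>n. A n \<subseteq> C n) sequentially"
  shows "wp_to_one M C"
proof -
  obtain BA where BA: "\<And>n. BA n \<in> sets (M n) \<and> BA n \<subseteq> A n" "(\<lambda>n. measure (M n) (BA n)) \<longlonglongrightarrow> 1"
    using a unfolding wp_to_one_def by blast
  define B' where "B' n = (if A n \<subseteq> C n then BA n else {})" for n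
  have "\<And>n. B' n \<in> sets (M n) \<and> B' n \<subseteq> C n" using BA by (auto simp: B'_def)
  moreover have "(\<lambda>n. measure (M n) (B' n)) \<longlonglongrightarrow> 1"
  proof (rule Lim_transform_eventually[OF BA(2)])
    show "\<forall>\<^sub>F n in sequentially. measure (M n) (BA n) = measure (M n) (B' n)"
      using ev by eventually_elim (simp add: B'_def)
  qed
  ultimately show ?thesis unfolding wp_to_one_def by blast
qed


theorem lemma1:
  fixes M :: "nat \<Rightarrow> 'a measure"
    and d :: "nat \<Rightarrow> nat" and q :: nat
    and Z :: "nat \<Rightarrow> 'a \<Rightarrow> (nat \<Rightarrow> nat \<Rightarrow> real)"
    and t :: "nat \<Rightarrow> (nat \<Rightarrow> nat \<Rightarrow> real) \<Rightarrow> (nat \<Rightarrow> real) \<Rightarrow> nat \<Rightarrow> real"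
    and T :: "nat \<Rightarrow> (nat \<Rightarrow> nat \<Rightarrow> real) \<Rightarrow> (nat \<Rightarrow> real) \<Rightarrow> nat \<Rightarrow> nat \<Rightarrow> real"
    and Et :: "nat \<Rightarrow> (nat \<Rightarrow> real) \<Rightarrow> nat \<Rightarrow> real"
    and ET :: "nat \<Rightarrow> (nat \<Rightarrow> real) \<Rightarrow> nat \<Rightarrow> nat \<Rightarrow> real"
    and \<beta>star :: "nat \<Rightarrow> nat \<Rightarrow> real" and \<theta>star :: real
    and vstar :: "nat \<Rightarrow> nat \<Rightarrow> real"
    and \<beta>hat :: "nat \<Rightarrow> 'a \<Rightarrow> nat \<Rightarrow> real"
    and vhat :: "nat \<Rightarrow> 'a \<Rightarrow> nat \<Rightarrow> real"
    and lam lam' :: "nat \<Rightarrow> real"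
    and N :: "real set"
    and r1 r2 r3 :: "nat \<Rightarrow> real \<Rightarrow> real"
    and r4 r5 :: "nat \<Rightarrow> real"
  assumes prob: "\<And>n. prob_space (M n)"
    and dpos: "\<And>n. 1 \<le> d n"
    and Zmat: "\<And>n \<omega>. \<omega> \<in> space (M n) \<Longrightarrow> Z n \<omega> \<in> mats n q"
    \<comment> \<open>t is twice differentiable in beta, with first derivative T\<close>
    and t_diff: "\<And>n z i \<beta>. z \<in> mats n q \<Longrightarrow> i < d n \<Longrightarrow> \<beta> \<in> vecs (d n) \<Longrightarrow>
        frechet_diff_at (d n) (\<lambda>b. t n z b i) (\<lambda>j. T n z \<beta> i j) \<beta>"
    and T_diff: "\<And>n z. z \<in> mats n q \<Longrightarrow> \<exists>T2. \<forall>\<beta>\<in>vecs (d n). \<forall>i<d n. \<forall>j<d n.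
        frechet_diff_at (d n) (\<lambda>b. T n z b i j) (T2 \<beta> i j) \<beta>"
    \<comment> \<open>beta* is the unique root of E_t; theta* its first coordinate\<close>
    and \<beta>star_vec: "\<And>n. \<beta>star n \<in> vecs (d n)"
    and \<theta>star: "\<And>n. \<beta>star n 0 = \<theta>star"
    and root: "\<And>n j. j < d n \<Longrightarrow> Et n (\<beta>star n) j = 0"
    and root_unique: "\<And>n \<beta>. \<beta> \<in> vecs (d n) \<Longrightarrow> (\<forall>j<d n. Et n \<beta> j = 0) \<Longrightarrow> \<beta> = \<beta>star n"
    \<comment> \<open>E_T(beta*) invertible, v* = first row of its inverse\<close>
    and vstar_vec: "\<And>n. vstar n \<in> vecs (d n)"
    and vstar: "\<And>n. \<exists>B. is_inverse_mat (d n) (ET n (\<beta>star n)) B \<and> (\<forall>j<d n. vstar n j = B 0 j)"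
    \<comment> \<open>Dantzig-type estimators betahat and vhat\<close>
    and \<beta>hat: "\<And>n \<omega>. \<omega> \<in> space (M n) \<Longrightarrow>
        \<beta>hat n \<omega> \<in> vecs (d n) \<and> linfnorm (d n) (t n (Z n \<omega>) (\<beta>hat n \<omega>)) \<le> lam n \<and>
        (\<forall>b\<in>vecs (d n). linfnorm (d n) (t n (Z n \<omega>) b) \<le> lam n \<longrightarrow>
            l1norm (d n) (\<beta>hat n \<omega>) \<le> l1norm (d n) b)"
    and vhat: "\<And>n \<omega>. \<omega> \<in> space (M n) \<Longrightarrow>
        vhat n \<omega> \<in> vecs (d n) \<and>
        linfnorm (d n) (\<lambda>k. vecmat (d n) (vhat n \<omega>) (T n (Z n \<omega>) (\<beta>hat n \<omega>)) k - e1 k) \<le> lam' n \<and>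
        (\<forall>v\<in>vecs (d n). linfnorm (d n) (\<lambda>k. vecmat (d n) v (T n (Z n \<omega>) (\<beta>hat n \<omega>)) k - e1 k) \<le> lam' n
            \<longrightarrow> l1norm (d n) (vhat n \<omega>) \<le> l1norm (d n) v)"
    \<comment> \<open>Concentration Assumption\<close>
    and N_open: "open N" and N_mem: "\<theta>star \<in> N"
    and r_sup: "(\<lambda>n. SUP \<theta>\<in>N. ereal (max (r1 n \<theta>) (max (r2 n \<theta>) (r3 n \<theta>)))) \<longlonglongrightarrow> 0"
    and conc1: "\<And>\<theta>. \<theta> \<in> N \<Longrightarrow> wp_to_one M (\<lambda>n. {\<omega> \<in> space (M n).
        linfnorm (d n) (\<lambda>j. t n (Z n \<omega>) ((\<beta>star n)(0 := \<theta>)) j - Et n ((\<beta>star n)(0 := \<theta>)) j)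
          \<le> r1 n \<theta>})"
    and conc2: "\<And>\<theta>. \<theta> \<in> N \<Longrightarrow> wp_to_one M (\<lambda>n. {\<omega> \<in> space (M n).
        \<bar>dotp (d n) (vstar n) (t n (Z n \<omega>) ((\<beta>star n)(0 := \<theta>)))
          - dotp (d n) (vstar n) (Et n ((\<beta>star n)(0 := \<theta>)))\<bar> \<le> r2 n \<theta>})"
    and conc3: "\<And>\<theta>. \<theta> \<in> N \<Longrightarrow> wp_to_one M (\<lambda>n. {\<omega> \<in> space (M n).
        \<forall>\<nu>\<in>{0..1::real}.
          linfnorm (d n) (\<lambda>k.
              vecmat (d n) (vhat n \<omega>)
                (T n (Z n \<omega>) (\<lambda>j. \<nu> * ((\<beta>hat n \<omega>)(0 := \<theta>)) j + (1 - \<nu>) * ((\<beta>star n)(0 := \<theta>)) j)) k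
            - vecmat (d n) (vstar n) (ET n ((\<beta>star n)(0 := \<theta>))) k)
          \<le> r3 n \<theta>})"
    and Et_bdd: "\<exists>C. \<forall>n. \<forall>\<theta>\<in>N. linfnorm (d n) (Et n ((\<beta>star n)(0 := \<theta>))) \<le> C"
    and ET_bdd: "\<exists>C. \<forall>n. \<forall>\<theta>\<in>N. \<forall>k. 1 \<le> k \<and> k < d n \<longrightarrow>
        \<bar>vecmat (d n) (vstar n) (ET n ((\<beta>star n)(0 := \<theta>))) k\<bar> \<le> C"
    \<comment> \<open>L1-Consistency Assumption\<close>
    and cons4: "wp_to_one M (\<lambda>n. {\<omega> \<in> space (M n).
        l1norm (d n) (\<lambda>j. \<beta>hat n \<omega> j - \<beta>star n j) \<le> r4 n})"
    and cons5: "wp_to_one M (\<lambda>n. {\<omega> \<in> space (M n).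
        l1norm (d n) (\<lambda>j. vhat n \<omega> j - vstar n j) \<le> r5 n})"
    and r45: "(\<lambda>n. max (r4 n) (r5 n)) \<longlonglongrightarrow> 0"
    \<comment> \<open>rate condition\<close>
    and rate: "(\<lambda>n. sqrt (real n) * (r4 n * r3 n \<theta>star + r5 n * r1 n \<theta>star)) \<longlonglongrightarrow> 0"
  shows "op1 M (\<lambda>n \<omega>.
      sqrt (real n) * dotp (d n) (vhat n \<omega>) (t n (Z n \<omega>) ((\<beta>hat n \<omega>)(0 := \<theta>star)))
    - sqrt (real n) * dotp (d n) (vstar n) (t n (Z n \<omega>) (\<beta>star n)))"
  proof (unfold op1_def, intro allI impI)
  fix \<epsilon> :: real assume \<epsilon>: "\<epsilon> > 0"
  have bsfix: "\<And>n. (\<beta>star n)(0 := \<theta>star) = \<beta>star n"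
    using \<theta>star by (metis fun_upd_triv)
  note w1 = conc1[OF N_mem] and w3 = conc3[OF N_mem]
  note wE = wp_Int[OF prob wp_Int[OF prob wp_Int[OF prob w1 w3] cons4] cons5]
  have ev: "eventually (\<lambda>n. sqrt (real n) * (r4 n * r3 n \<theta>star + r5 n * r1 n \<theta>star) < \<epsilon>) sequentially"
    using order_tendstoD(2)[OF rate \<epsilon>] .
  show "wp_to_one M (\<lambda>n. {\<omega> \<in> space (M n). \<bar>sqrt (real n) * dotp (d n) (vhat n \<omega>) (t n (Z n \<omega>) ((\<beta>hat n \<omega>)(0 := \<theta>star)))
    - sqrt (real n) * dotp (d n) (vstar n) (t n (Z n \<omega>) (\<beta>star n))\<bar> \<le> \<epsilon>})"
    apply (rule wp_mono_ev[OF wE])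
    using ev
  proof eventually_elim
    case (elim n)
    show ?case
    proof
      fix \<omega> assume \<omega>: "\<omega> \<in> {\<omega> \<in> space (M n).
          linfnorm (d n) (\<lambda>j. t n (Z n \<omega>) ((\<beta>star n)(0 := \<theta>star)) j - Et n ((\<beta>star n)(0 := \<theta>star)) j) \<le> r1 n \<theta>star} \<inter>
         {\<omega> \<in> space (M n). \<forall>\<nu>\<in>{0..1::real}. linfnorm (d n) (\<lambda>k. vecmat (d n) (vhat n \<omega>)
                 (T n (Z n \<omega>) (\<lambda>j. \<nu> * ((\<beta>hat n \<omega>)(0 := \<theta>star)) j + (1 - \<nu>) * ((\<beta>star n)(0 := \<theta>star)) j)) k
               - vecmat (d n) (vstar n) (ET n ((\<beta>star n)(0 := \<theta>star))) k) \<le> r3 n \<theta>star} \<inter>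
         {\<omega> \<in> space (M n). l1norm (d n) (\<lambda>j. \<beta>hat n \<omega> j - \<beta>star n j) \<le> r4 n} \<inter>
         {\<omega> \<in> space (M n). l1norm (d n) (\<lambda>j. vhat n \<omega> j - vstar n j) \<le> r5 n}"
      have sp: "\<omega> \<in> space (M n)" using \<omega> by blast
      have inv: "\<And>k. k < d n \<Longrightarrow> vecmat (d n) (vstar n) (ET n (\<beta>star n)) k = e1 k"
      proof -
        fix k assume k: "k < d n"
        obtain B where B: "is_inverse_mat (d n) (ET n (\<beta>star n)) B" "\<forall>j<d n. vstar n j = B 0 j"
          using vstar by blast
        have "vecmat (d n) (vstar n) (ET n (\<beta>star n)) k = (\<Sum>j<d n. B 0 j * ET n (\<beta>star n) j k)"
          unfolding vecmat_def using B(2) by (intro sum.cong) auto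
        also have "\<dots> = (if 0 = k then 1 else 0)"
          using B(1) k dpos[of n] unfolding is_inverse_mat_def by auto
        finally show "vecmat (d n) (vstar n) (ET n (\<beta>star n)) k = e1 k" by (simp add: e1_def)
      qed
      have bnd: "\<bar>dotp (d n) (vhat n \<omega>) (t n (Z n \<omega>) ((\<beta>hat n \<omega>)(0 := \<theta>star)))
          - dotp (d n) (vstar n) (t n (Z n \<omega>) (\<beta>star n))\<bar>
          \<le> r4 n * r3 n \<theta>star + r5 n * r1 n \<theta>star"
      proof (rule core[where ETc = "ET n (\<beta>star n)" and Etc = "Et n (\<beta>star n)" and tt = "t n (Z n \<omega>)"
          and TT = "T n (Z n \<omega>)" and vh = "vhat n \<omega>" and vs = "vstar n" and bs = "\<beta>star n"
          and bh = "\<beta>hat n \<omega>" and \<theta>c = \<theta>star and d = "d n" and Ro = "r1 n \<theta>star"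
          and Rt = "r3 n \<theta>star" and Rf = "r4 n" and Rv = "r5 n"])
        show "1 \<le> d n" by (rule dpos)
        show "\<beta>star n \<in> vecs (d n)" by (rule \<beta>star_vec)
        show "\<beta>hat n \<omega> \<in> vecs (d n)" using \<beta>hat[OF sp] by blast
        show "\<And>\<beta> i. \<beta> \<in> vecs (d n) \<Longrightarrow> i < d n \<Longrightarrow> frechet_diff_at (d n) (\<lambda>b. t n (Z n \<omega>) b i) (\<lambda>j. T n (Z n \<omega>) \<beta> i j) \<beta>"
          using t_diff Zmat[OF sp] by blast
        show "\<And>k. k < d n \<Longrightarrow> vecmat (d n) (vstar n) (ET n (\<beta>star n)) k = e1 k" by (rule inv)
        show "linfnorm (d n) (\<lambda>j. t n (Z n \<omega>) (\<beta>star n) j - Et n (\<beta>star n) j) \<le> r1 n \<theta>star"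
          using \<omega> by (simp add: bsfix)
        show "\<And>j. j < d n \<Longrightarrow> Et n (\<beta>star n) j = 0" by (rule root)
        show "\<forall>\<nu>\<in>{0..1::real}. linfnorm (d n) (\<lambda>k. vecmat (d n) (vhat n \<omega>)
           (T n (Z n \<omega>) (\<lambda>j. \<nu> * ((\<beta>hat n \<omega>)(0 := \<theta>star)) j + (1 - \<nu>) * \<beta>star n j)) k - vecmat (d n) (vstar n) (ET n (\<beta>star n)) k) \<le> r3 n \<theta>star"
          using \<omega> by (simp add: bsfix)
        show "\<beta>star n 0 = \<theta>star" by (rule \<theta>star)
        show "l1norm (d n) (\<lambda>j. \<beta>hat n \<omega> j - \<beta>star n j) \<le> r4 n" using \<omega> by blast
        show "l1norm (d n) (\<lambda>j. vhat n \<omega> j - vstar n j) \<le> r5 n" using \<omega> by blast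
      qed
      have "\<bar>sqrt (real n) * dotp (d n) (vhat n \<omega>) (t n (Z n \<omega>) ((\<beta>hat n \<omega>)(0 := \<theta>star)))
          - sqrt (real n) * dotp (d n) (vstar n) (t n (Z n \<omega>) (\<beta>star n))\<bar>
          = sqrt (real n) * \<bar>dotp (d n) (vhat n \<omega>) (t n (Z n \<omega>) ((\<beta>hat n \<omega>)(0 := \<theta>star)))
          - dotp (d n) (vstar n) (t n (Z n \<omega>) (\<beta>star n))\<bar>"
        by (simp add: right_diff_distrib[symmetric] abs_mult)
      also have "\<dots> \<le> sqrt (real n) * (r4 n * r3 n \<theta>star + r5 n * r1 n \<theta>star)"
        by (rule mult_left_mono[OF bnd]) simp
      also have "\<dots> \<le> \<epsilon>" using elim by simp
      finally show "\<omega> \<in> {\<omega> \<in> space (M n). \<bar>sqrt (real n) * dotp (d n) (vhat n \<omega>) (t n (Z n \<omega>) ((\<beta>hat n \<omega>)(0 := \<theta>star)))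
          - sqrt (real n) * dotp (d n) (vstar n) (t n (Z n \<omega>) (\<beta>star n))\<bar> \<le> \<epsilon>}"
        using sp by blast
    qed
  qed
qed

end
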